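(* Let $\nu>0$, let $T>0$, and let $u(x,t)$, $\ell(x,t)$, $v(x,t)$ (vector valued, three components each), $n(x,t)$ (scalar) and $f(x,t)$ (vector valued) be smooth functions on $\mathbb{R}^3\times[0,T]$. Put $A(x,t)=x+\ell(x,t)$, let $\nabla A$ denote the matrix with entries $(\nabla A)_{mj}=\partial_j A^m$, assume $\nabla A(x,t)$ is invertible for all $(x,t)$, and let $Q=(\nabla A)^{-1}$. Let $\Gamma=\partial_t+u\cdot\nabla-\nu\Delta$ (acting componentwise on vectors), and define $$C_{m,k;i}=Q_{ji}\,\partial_j\partial_k A^m .$$ Assume that $$u^i=(\partial_iA^m)v_m-\partial_i n,$$ that $$(\partial_t+u\cdot\nabla-\nu\Delta)\ell+u=0,$$ and that $$\Gamma v_i=2\nu\, C_{m,k;i}\,\partial_k v_m+Q_{ji}f_j,\qquad i=1,2,3.$$ Then $u$ satisfies $$\partial_t u+u\cdot\nabla u-\nu\Delta u+\nabla p=f$$ with pressure $p=\Gamma n+\frac{|u|^2}{2}+c$, where $c$ is an arbitrary constant.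
   Context: Repeated indices are summed over $\{1,2,3\}$; $\partial_i$ denotes differentiation in the $i$-th Eulerian Cartesian coordinate. No divergence-free condition on $u$ is assumed. *)

theory Defs
  imports "HOL-Analysis.Analysis"
begin

(* Directional derivative of g at z along e, taken within the set S
   (one-sided at boundary points, e.g. at t = 0 and t = T). *)
definition dderiv :: "('a::real_normed_vector \<Rightarrow> real) \<Rightarrow> 'a set \<Rightarrow> 'a \<Rightarrow> 'a \<Rightarrow> real" where
  "dderiv g S e z =
     (THE D. ((\<lambda>h. g (z + h *\<^sub>R e)) has_real_derivative D) (at 0 within {h. z + h *\<^sub>R e \<in> S}))"

fun iter_dderiv :: "('a::real_normed_vector \<Rightarrow> real) \<Rightarrow> 'a set \<Rightarrow> 'a list \<Rightarrow> 'a \<Rightarrow> real" where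
  "iter_dderiv g S [] = g"
| "iter_dderiv g S (e # es) = dderiv (iter_dderiv g S es) S e"

definition smooth_on :: "'a::euclidean_space set \<Rightarrow> ('a \<Rightarrow> real) \<Rightarrow> bool" where
  "smooth_on S g \<longleftrightarrow>
     (\<forall>es. set es \<subseteq> Basis \<longrightarrow>
        continuous_on S (iter_dderiv g S es) \<and>
        (\<forall>e\<in>Basis. \<forall>z\<in>S. \<exists>D.
           ((\<lambda>h. iter_dderiv g S es (z + h *\<^sub>R e)) has_real_derivative D)
             (at 0 within {h. z + h *\<^sub>R e \<in> S})))"

definition dom :: "real \<Rightarrow> ((real^3) \<times> real) set" where
  "dom T = UNIV \<times> {0..T}"

type_synonym sfield = "real^3 \<Rightarrow> real \<Rightarrow> real"
type_synonym vfield = "real^3 \<Rightarrow> real \<Rightarrow> real^3"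

definition smooth_s :: "real \<Rightarrow> sfield \<Rightarrow> bool" where
  "smooth_s T f \<longleftrightarrow> smooth_on (dom T) (\<lambda>(y, s). f y s)"

definition smooth_v :: "real \<Rightarrow> vfield \<Rightarrow> bool" where
  "smooth_v T f \<longleftrightarrow> (\<forall>i. smooth_s T (\<lambda>y s. f y s $ i))"

definition dx :: "real \<Rightarrow> 3 \<Rightarrow> sfield \<Rightarrow> sfield" where
  "dx T j f x t = dderiv (\<lambda>(y, s). f y s) (dom T) (axis j 1, 0) (x, t)"

definition dt :: "real \<Rightarrow> sfield \<Rightarrow> sfield" where
  "dt T f x t = dderiv (\<lambda>(y, s). f y s) (dom T) (0, 1) (x, t)"

definition comp :: "vfield \<Rightarrow> 3 \<Rightarrow> sfield" where
  "comp w i = (\<lambda>x t. w x t $ i)"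

definition lap :: "real \<Rightarrow> sfield \<Rightarrow> sfield" where
  "lap T f x t = (\<Sum>k\<in>UNIV. dx T k (dx T k f) x t)"

definition Gam :: "real \<Rightarrow> real \<Rightarrow> vfield \<Rightarrow> sfield \<Rightarrow> sfield" where
  "Gam T \<nu> u f x t =
     dt T f x t + (\<Sum>k\<in>UNIV. u x t $ k * dx T k f x t) - \<nu> * lap T f x t"

definition gradm :: "real \<Rightarrow> vfield \<Rightarrow> real^3 \<Rightarrow> real \<Rightarrow> real^3^3" where
  "gradm T w x t = (\<chi> m j. dx T j (comp w m) x t)"

end

theory Submission
  imports Defs "HOL-Analysis.Analysis"
begin


type_synonym pt = "(real^3) \<times> real"

definition HD :: "real \<Rightarrow> (pt \<Rightarrow> real) \<Rightarrow> pt \<Rightarrow> pt \<Rightarrow> real \<Rightarrow> bool" where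
  "HD T g e z D \<longleftrightarrow> ((\<lambda>h. g (z + h *\<^sub>R e)) has_real_derivative D) (at 0 within {h. z + h *\<^sub>R e \<in> dom T})"

lemma Basis_pt: "(e::pt) \<in> Basis \<longleftrightarrow> (\<exists>j. e = (axis j 1, 0)) \<or> e = (0, 1)"
  by (auto simp: Basis_prod_def Basis_vec_def)

lemma nontriv:
  assumes T: "T > 0" and z: "z \<in> dom T" and e: "e \<in> Basis"
  shows "\<not> trivial_limit (at (0::real) within {h. z + h *\<^sub>R e \<in> dom T})"
proof -
  obtain x t where zt: "z = (x, t)" by fastforce
  from e consider j where "e = (axis j 1, 0)" | "e = (0, 1)" by (auto simp: Basis_pt)
  then show ?thesis
  proof cases
    case 1
    then have "{h. z + h *\<^sub>R e \<in> dom T} = UNIV" using z by (auto simp: dom_def zt)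
    then show ?thesis by simp
  next
    case 2
    then have "{h. z + h *\<^sub>R e \<in> dom T} = {-t..T-t}" using z by (auto simp: dom_def zt)
    moreover have "-t < T - t" using T by simp
    moreover have "0 \<in> {-t..T-t}" using z by (auto simp: dom_def zt)
    ultimately show ?thesis by (simp add: trivial_limit_within)
  qed
qed

lemma HD_unique:
  assumes "T > 0" "z \<in> dom T" "e \<in> Basis" "HD T g e z D1" "HD T g e z D2"
  shows "D1 = D2"
  using assms nontriv[OF assms(1-3)] unfolding HD_def has_field_derivative_iff
  using tendsto_unique by blast

lemma dd_eq:
  assumes "T > 0" "z \<in> dom T" "e \<in> Basis" "HD T g e z D"
  shows "dderiv g (dom T) e z = D"
  unfolding dderiv_def using assms HD_unique[OF assms(1-3)] unfolding HD_def
  by (intro the_equality) (auto simp: HD_def)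

lemma dd_HD:
  assumes "T > 0" "z \<in> dom T" "e \<in> Basis" "HD T g e z D"
  shows "HD T g e z (dderiv g (dom T) e z)"
  using dd_eq[OF assms] assms(4) by simp

lemma HD_cong:
  assumes "z \<in> dom T" "\<And>w. w \<in> dom T \<Longrightarrow> g1 w = g2 w"
  shows "HD T g1 e z D = HD T g2 e z D"
  unfolding HD_def
  by (rule has_field_derivative_cong_ev) (auto simp: assms)

lemma dd_cong:
  assumes "z \<in> dom T" "\<And>w. w \<in> dom T \<Longrightarrow> g1 w = g2 w"
  shows "dderiv g1 (dom T) e z = dderiv g2 (dom T) e z"
proof -
  have "\<And>D. HD T g1 e z D = HD T g2 e z D" using HD_cong[of z T g1 g2 e] assms by blast
  then show ?thesis unfolding dderiv_def HD_def by simp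
qed

lemma iter_append: "iter_dderiv (dderiv g S e) S es = iter_dderiv g S (es @ [e])"
  by (induction es) auto

lemma smooth_dd:
  assumes "smooth_on S g" "e \<in> Basis"
  shows "smooth_on S (dderiv g S e)"
  unfolding smooth_on_def
proof (intro allI impI)
  fix es :: "'a list" assume "set es \<subseteq> Basis"
  then have "set (es @ [e]) \<subseteq> Basis" using assms(2) by simp
  then show "continuous_on S (iter_dderiv (dderiv g S e) S es) \<and>
        (\<forall>e'\<in>Basis. \<forall>z\<in>S. \<exists>D. ((\<lambda>h. iter_dderiv (dderiv g S e) S es (z + h *\<^sub>R e')) has_real_derivative D)
             (at 0 within {h. z + h *\<^sub>R e' \<in> S}))"
    using assms(1) unfolding smooth_on_def iter_append by blast
qed


inductive PP :: "real \<Rightarrow> (pt \<Rightarrow> real) \<Rightarrow> bool" for T where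
  sm: "smooth_on (dom T) g \<Longrightarrow> PP T g"
| add: "PP T f \<Longrightarrow> PP T g \<Longrightarrow> PP T (\<lambda>z. f z + g z)"
| mult: "PP T f \<Longrightarrow> PP T g \<Longrightarrow> PP T (\<lambda>z. f z * g z)"
| const: "PP T (\<lambda>z. c)"
| lin: "bounded_linear L \<Longrightarrow> PP T L"

lemma PP_props:
  assumes T: "T > 0" and "PP T g"
  shows "continuous_on (dom T) g \<and> (\<forall>e\<in>Basis. \<exists>g'. PP T g' \<and> (\<forall>z\<in>dom T. HD T g e z (g' z)))"
  using assms(2)
proof induction
  case (sm g)
  have c: "continuous_on (dom T) g"
    using sm unfolding smooth_on_def by (metis empty_subsetI iter_dderiv.simps(1) list.set(1))
  have "\<exists>g'. PP T g' \<and> (\<forall>z\<in>dom T. HD T g e z (g' z))" if e: "e \<in> Basis" for e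
  proof (intro exI conjI ballI)
    show "PP T (dderiv g (dom T) e)" by (rule PP.sm, rule smooth_dd[OF sm e])
    fix z assume z: "z \<in> dom T"
    have "\<exists>D. HD T g e z D"
      using sm e z unfolding smooth_on_def HD_def
      by (metis empty_subsetI iter_dderiv.simps(1) list.set(1))
    then show "HD T g e z (dderiv g (dom T) e z)" using dd_HD[OF T z e] by blast
  qed
  then show ?case using c by blast
next
  case (add f g)
  have "\<exists>g'. PP T g' \<and> (\<forall>z\<in>dom T. HD T (\<lambda>z. f z + g z) e z (g' z))" if e: "e \<in> Basis" for e
  proof -
    obtain f' where f': "PP T f'" "\<forall>z\<in>dom T. HD T f e z (f' z)" using add e by blast
    obtain g' where g': "PP T g'" "\<forall>z\<in>dom T. HD T g e z (g' z)" using add e by blast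
    show ?thesis
      apply (rule exI[of _ "\<lambda>z. f' z + g' z"])
      using f' g' by (auto simp: HD_def intro!: PP.add DERIV_add)
  qed
  then show ?case using add by (auto intro!: continuous_on_add)
next
  case (mult f g)
  have "\<exists>g'. PP T g' \<and> (\<forall>z\<in>dom T. HD T (\<lambda>z. f z * g z) e z (g' z))" if e: "e \<in> Basis" for e
  proof -
    obtain f' where f': "PP T f'" "\<forall>z\<in>dom T. HD T f e z (f' z)" using mult e by blast
    obtain g' where g': "PP T g'" "\<forall>z\<in>dom T. HD T g e z (g' z)" using mult e by blast
    show ?thesis
    proof (rule exI[of _ "\<lambda>z. f' z * g z + g' z * f z"], intro conjI ballI)
      show "PP T (\<lambda>z. f' z * g z + g' z * f z)"
        using f' g' mult by (auto intro!: PP.add PP.mult)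
      fix z assume z: "z \<in> dom T"
      have "((\<lambda>h. f (z + h *\<^sub>R e) * g (z + h *\<^sub>R e)) has_real_derivative
          f' z * g (z + 0 *\<^sub>R e) + g' z * f (z + 0 *\<^sub>R e)) (at 0 within {h. z + h *\<^sub>R e \<in> dom T})"
        using f' g' z unfolding HD_def by (intro DERIV_mult) auto
      then show "HD T (\<lambda>z. f z * g z) e z (f' z * g z + g' z * f z)" by (simp add: HD_def)
    qed
  qed
  then show ?case using mult by (auto intro!: continuous_on_mult)
next
  case (const c)
  show ?case
    by (auto simp: HD_def intro!: exI[of _ "\<lambda>z. 0"] PP.const)
next
  case (lin L)
  have "\<exists>g'. PP T g' \<and> (\<forall>z\<in>dom T. HD T L e z (g' z))" for e
  proof (rule exI[of _ "\<lambda>_. L e"], intro conjI ballI)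
    show "PP T (\<lambda>_. L e)" by (rule PP.const)
    fix z
    have eq: "(\<lambda>h. L (z + h *\<^sub>R e)) = (\<lambda>h. L z + h * L e)"
      using lin by (auto simp: bounded_linear.linear linear_add linear_scale)
    show "HD T L e z (L e)" unfolding HD_def eq
      by (auto intro!: derivative_eq_intros)
  qed
  then show ?case using lin by (auto intro: linear_continuous_on)
qed

lemma PP_iter:
  assumes T: "T > 0" and "PP T g" "set es \<subseteq> Basis"
  shows "\<exists>g'. PP T g' \<and> (\<forall>z\<in>dom T. iter_dderiv g (dom T) es z = g' z)"
  using assms(3)
proof (induction es)
  case Nil
  then show ?case using assms(2) by auto
next
  case (Cons e es)
  then obtain g1 where g1: "PP T g1" "\<forall>z\<in>dom T. iter_dderiv g (dom T) es z = g1 z" by auto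
  have e: "e \<in> Basis" using Cons by auto
  obtain g2 where g2: "PP T g2" "\<forall>z\<in>dom T. HD T g1 e z (g2 z)" using PP_props[OF T g1(1)] e by blast
  show ?case
  proof (intro exI conjI ballI)
    show "PP T g2" by fact
    fix z assume z: "z \<in> dom T"
    have "iter_dderiv g (dom T) (e # es) z = dderiv g1 (dom T) e z"
      using dd_cong[of z T "iter_dderiv g (dom T) es" g1 e] g1 z by simp
    also have "\<dots> = g2 z" using dd_eq[OF T z e] g2 z by blast
    finally show "iter_dderiv g (dom T) (e # es) z = g2 z" .
  qed
qed

lemma PP_smooth:
  assumes T: "T > 0" and "PP T g"
  shows "smooth_on (dom T) g"
  unfolding smooth_on_def
proof (intro allI impI conjI ballI)
  fix es :: "pt list" assume es: "set es \<subseteq> Basis"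
  obtain g' where g': "PP T g'" "\<forall>z\<in>dom T. iter_dderiv g (dom T) es z = g' z"
    using PP_iter[OF T assms(2) es] by blast
  show "continuous_on (dom T) (iter_dderiv g (dom T) es)"
    using PP_props[OF T g'(1)] g'(2) continuous_on_cong by fastforce
  fix e z :: pt assume e: "e \<in> Basis" and z: "z \<in> dom T"
  obtain g'' where "\<forall>z\<in>dom T. HD T g' e z (g'' z)" using PP_props[OF T g'(1)] e by blast
  then have "HD T (iter_dderiv g (dom T) es) e z (g'' z)"
    using HD_cong[of z T "iter_dderiv g (dom T) es" g'] g'(2) z by simp
  then show "\<exists>D. ((\<lambda>h. iter_dderiv g (dom T) es (z + h *\<^sub>R e)) has_real_derivative D)
             (at 0 within {h. z + h *\<^sub>R e \<in> dom T})" unfolding HD_def by blast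
qed



lemma smooth_cont: "smooth_on S g \<Longrightarrow> continuous_on S g"
  unfolding smooth_on_def by (metis empty_subsetI iter_dderiv.simps(1) list.set(1))

lemma smooth_ex: "smooth_on S g \<Longrightarrow> e \<in> Basis \<Longrightarrow> z \<in> S \<Longrightarrow>
   \<exists>D. ((\<lambda>h. g (z + h *\<^sub>R e)) has_real_derivative D) (at 0 within {h. z + h *\<^sub>R e \<in> S})"
  unfolding smooth_on_def by (metis empty_subsetI iter_dderiv.simps(1) list.set(1))

lemma HD_at:
  assumes T: "T > 0" and g: "smooth_on (dom T) g" and e: "e \<in> Basis" and w: "w \<in> interior (dom T)"
  shows "((\<lambda>s. g (w + s *\<^sub>R e)) has_real_derivative dderiv g (dom T) e w) (at 0)"
proof -
  have wS: "w \<in> dom T" using w interior_subset by blast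
  have "HD T g e w (dderiv g (dom T) e w)"
    using smooth_ex[OF g e wS] dd_HD[OF T wS e] unfolding HD_def by blast
  moreover have "at (0::real) within {h. w + h *\<^sub>R e \<in> dom T} = at 0"
  proof (rule at_within_open_subset)
    let ?O = "(\<lambda>s::real. w + s *\<^sub>R e) -` interior (dom T)"
    show "0 \<in> ?O" using w by simp
    show "open ?O" by (intro open_vimage open_interior continuous_intros)
    show "?O \<subseteq> {h. w + h *\<^sub>R e \<in> dom T}" using interior_subset[of "dom T"] by blast
  qed
  ultimately show ?thesis unfolding HD_def by simp
qed

lemma line_deriv:
  assumes T: "T > 0" and g: "smooth_on (dom T) g" and e: "e \<in> Basis"
    and w: "p + a *\<^sub>R e \<in> interior (dom T)"
  shows "((\<lambda>a. g (p + a *\<^sub>R e)) has_real_derivative dderiv g (dom T) e (p + a *\<^sub>R e)) (at a)"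
proof -
  have "((\<lambda>s. g ((p + a *\<^sub>R e) + s *\<^sub>R e)) has_real_derivative dderiv g (dom T) e (p + a *\<^sub>R e)) (at 0)"
    by (rule HD_at[OF T g e w])
  moreover have "(\<lambda>s. g ((p + a *\<^sub>R e) + s *\<^sub>R e)) = (\<lambda>s. (\<lambda>a. g (p + a *\<^sub>R e)) (s + a))"
    by (auto simp: algebra_simps)
  ultimately show ?thesis using DERIV_shift[of "\<lambda>a. g (p + a *\<^sub>R e)" _ 0 a] by simp
qed

lemma schwarz_step:
  assumes T: "T > 0" and g: "smooth_on (dom T) g" and e1: "e1 \<in> Basis" and e2: "e2 \<in> Basis"
    and h: "h > 0"
    and I: "\<And>a b. 0 \<le> a \<Longrightarrow> a \<le> h \<Longrightarrow> 0 \<le> b \<Longrightarrow> b \<le> h \<Longrightarrow> z + a *\<^sub>R e1 + b *\<^sub>R e2 \<in> interior (dom T)"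
  shows "\<exists>a b. 0 \<le> a \<and> a \<le> h \<and> 0 \<le> b \<and> b \<le> h \<and>
     g (z + h *\<^sub>R e1 + h *\<^sub>R e2) - g (z + h *\<^sub>R e1) - g (z + h *\<^sub>R e2) + g z
       = h * h * dderiv (dderiv g (dom T) e1) (dom T) e2 (z + a *\<^sub>R e1 + b *\<^sub>R e2)"
proof -
  let ?S = "dom T"
  let ?g1 = "dderiv g ?S e1"
  have g1: "smooth_on ?S ?g1" by (rule smooth_dd[OF g e1])
  define ps where "ps a = g (z + h *\<^sub>R e2 + a *\<^sub>R e1) - g (z + a *\<^sub>R e1)" for a
  define ps' where "ps' a = ?g1 (z + h *\<^sub>R e2 + a *\<^sub>R e1) - ?g1 (z + a *\<^sub>R e1)" for a
  have dpsi: "DERIV ps a :> ps' a"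
    if "0 \<le> a" "a \<le> h" for a
  proof -
    have i1: "z + h *\<^sub>R e2 + a *\<^sub>R e1 \<in> interior ?S"
    proof -
      have "z + h *\<^sub>R e2 + a *\<^sub>R e1 = z + a *\<^sub>R e1 + h *\<^sub>R e2"
        by (simp only: add.assoc add.commute[of "h *\<^sub>R e2"])
      moreover have "z + a *\<^sub>R e1 + h *\<^sub>R e2 \<in> interior ?S" using that h by (intro I) auto
      ultimately show ?thesis by (simp only:)
    qed
    have i2: "z + a *\<^sub>R e1 \<in> interior ?S"
    proof -
      have "z + a *\<^sub>R e1 + 0 *\<^sub>R e2 \<in> interior ?S" using that h by (intro I) auto
      then show ?thesis by simp
    qed
    show ?thesis unfolding ps_def ps'_def
      by (intro DERIV_diff line_deriv[OF T g e1 i1] line_deriv[OF T g e1 i2])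
  qed
  obtain \<alpha> where \<alpha>: "0 < \<alpha>" "\<alpha> < h" "ps h - ps 0 = (h - 0) * ps' \<alpha>"
    using MVT2[OF h dpsi] by blast
  define ch where "ch b = ?g1 (z + \<alpha> *\<^sub>R e1 + b *\<^sub>R e2)" for b
  define ch' where "ch' b = dderiv ?g1 ?S e2 (z + \<alpha> *\<^sub>R e1 + b *\<^sub>R e2)" for b
  have dchi: "DERIV ch b :> ch' b" if "0 \<le> b" "b \<le> h" for b
    unfolding ch_def ch'_def using \<alpha> that by (intro line_deriv[OF T g1 e2] I) auto
  obtain \<beta> where \<beta>: "0 < \<beta>" "\<beta> < h" "ch h - ch 0 = (h - 0) * ch' \<beta>"
    using MVT2[OF h dchi] by blast
  have E: "z + h *\<^sub>R e2 + \<alpha> *\<^sub>R e1 = z + \<alpha> *\<^sub>R e1 + h *\<^sub>R e2"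
    by (simp only: add.assoc add.commute[of "h *\<^sub>R e2"])
  have "ps' \<alpha> = ch h - ch 0"
    unfolding ch_def ps'_def by (simp only: E, simp)
  then have "ps h - ps 0 = h * h * dderiv ?g1 ?S e2 (z + \<alpha> *\<^sub>R e1 + \<beta> *\<^sub>R e2)"
    using \<alpha>(3) \<beta>(3) unfolding ch'_def by simp
  moreover have "ps h - ps 0 = g (z + h *\<^sub>R e1 + h *\<^sub>R e2) - g (z + h *\<^sub>R e1) - g (z + h *\<^sub>R e2) + g z"
  proof -
    have E: "z + h *\<^sub>R e2 + h *\<^sub>R e1 = z + h *\<^sub>R e1 + h *\<^sub>R e2"
      by (simp only: add.assoc add.commute[of "h *\<^sub>R e2"])
    show ?thesis unfolding ps_def by (simp only: E, simp)
  qed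
  ultimately show ?thesis using \<alpha> \<beta> by (intro exI[of _ \<alpha>] exI[of _ \<beta>]) auto
qed


lemma near_pt:
  fixes z :: pt
  assumes e1: "e1 \<in> Basis" and e2: "e2 \<in> Basis" and "0 \<le> a" "a \<le> h" "0 \<le> b" "b \<le> h"
  shows "dist (z + a *\<^sub>R e1 + b *\<^sub>R e2) z \<le> 2 * h"
proof -
  have "dist (z + a *\<^sub>R e1 + b *\<^sub>R e2) z = norm (a *\<^sub>R e1 + b *\<^sub>R e2)"
    by (simp add: dist_norm algebra_simps)
  also have "\<dots> \<le> norm (a *\<^sub>R e1) + norm (b *\<^sub>R e2)" by (rule norm_triangle_ineq)
  also have "\<dots> = a + b" using assms by (simp add: norm_Basis)
  finally show ?thesis using assms by simp
qed

lemma abs_aux: "\<bar>p - a\<bar> < \<bar>a - b\<bar> / 2 \<Longrightarrow> \<bar>q - b\<bar> < \<bar>a - b\<bar> / 2 \<Longrightarrow> p = q \<Longrightarrow> False"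
  for p q a b :: real
  by (auto simp: abs_if split: if_split_asm)

lemma schwarz_interior:
  assumes T: "T > 0" and g: "smooth_on (dom T) g" and e1: "e1 \<in> Basis" and e2: "e2 \<in> Basis"
    and z: "z \<in> interior (dom T)"
  shows "dderiv (dderiv g (dom T) e1) (dom T) e2 z = dderiv (dderiv g (dom T) e2) (dom T) e1 z"
proof (rule ccontr)
  let ?S = "dom T"
  let ?g12 = "dderiv (dderiv g ?S e1) ?S e2"
  let ?g21 = "dderiv (dderiv g ?S e2) ?S e1"
  assume ne: "?g12 z \<noteq> ?g21 z"
  define d where "d = \<bar>?g12 z - ?g21 z\<bar>"
  have d: "d > 0" using ne unfolding d_def by simp
  have c12: "continuous (at z) ?g12"
    by (rule continuous_on_interior[OF smooth_cont z]) (intro smooth_dd g e1 e2)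
  have c21: "continuous (at z) ?g21"
    by (rule continuous_on_interior[OF smooth_cont z]) (intro smooth_dd g e1 e2)
  obtain d1 where d1: "d1 > 0" "\<And>w. dist w z < d1 \<Longrightarrow> dist (?g12 w) (?g12 z) < d / 2"
    using c12 d unfolding continuous_at_eps_delta by (meson half_gt_zero)
  obtain d2 where d2: "d2 > 0" "\<And>w. dist w z < d2 \<Longrightarrow> dist (?g21 w) (?g21 z) < d / 2"
    using c21 d unfolding continuous_at_eps_delta by (meson half_gt_zero)
  obtain r where r: "r > 0" "ball z r \<subseteq> interior ?S"
    using z open_interior open_contains_ball by blast
  define h where "h = min r (min d1 d2) / 3"
  have h: "h > 0" using r d1 d2 unfolding h_def by simp
  have h2: "2 * h < min r (min d1 d2)" unfolding h_def using r d1 d2 by linarith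
  have near: "dist (z + a *\<^sub>R ea + b *\<^sub>R eb) z < min r (min d1 d2)"
    if "ea \<in> Basis" "eb \<in> Basis" "0 \<le> a" "a \<le> h" "0 \<le> b" "b \<le> h" for a b ea eb
    using near_pt[OF that, of z] h2 by linarith
  have I: "z + a *\<^sub>R ea + b *\<^sub>R eb \<in> interior ?S"
    if "ea \<in> Basis" "eb \<in> Basis" "0 \<le> a" "a \<le> h" "0 \<le> b" "b \<le> h" for a b ea eb
  proof -
    have "z + a *\<^sub>R ea + b *\<^sub>R eb \<in> ball z r"
      using near[OF that] by (simp add: dist_commute)
    then show ?thesis using r(2) by blast
  qed
  obtain a1 b1 where ab1: "0 \<le> a1" "a1 \<le> h" "0 \<le> b1" "b1 \<le> h"
    "g (z + h *\<^sub>R e1 + h *\<^sub>R e2) - g (z + h *\<^sub>R e1) - g (z + h *\<^sub>R e2) + g z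
       = h * h * ?g12 (z + a1 *\<^sub>R e1 + b1 *\<^sub>R e2)"
    using schwarz_step[OF T g e1 e2 h I[OF e1 e2]] by blast
  obtain a2 b2 where ab2: "0 \<le> a2" "a2 \<le> h" "0 \<le> b2" "b2 \<le> h"
    "g (z + h *\<^sub>R e2 + h *\<^sub>R e1) - g (z + h *\<^sub>R e2) - g (z + h *\<^sub>R e1) + g z
       = h * h * ?g21 (z + a2 *\<^sub>R e2 + b2 *\<^sub>R e1)"
    using schwarz_step[OF T g e2 e1 h I[OF e2 e1]] by blast
  have E: "z + h *\<^sub>R e2 + h *\<^sub>R e1 = z + h *\<^sub>R e1 + h *\<^sub>R e2"
    by (simp only: add.assoc add.commute[of "h *\<^sub>R e2"])
  have "h * h * ?g12 (z + a1 *\<^sub>R e1 + b1 *\<^sub>R e2) = h * h * ?g21 (z + a2 *\<^sub>R e2 + b2 *\<^sub>R e1)"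
    using ab1(5) ab2(5) unfolding E by linarith
  then have eq: "?g12 (z + a1 *\<^sub>R e1 + b1 *\<^sub>R e2) = ?g21 (z + a2 *\<^sub>R e2 + b2 *\<^sub>R e1)"
    using h by simp
  have "dist (?g12 (z + a1 *\<^sub>R e1 + b1 *\<^sub>R e2)) (?g12 z) < d / 2"
    using d1(2) near[OF e1 e2 ab1(1-4)] by simp
  moreover have "dist (?g21 (z + a2 *\<^sub>R e2 + b2 *\<^sub>R e1)) (?g21 z) < d / 2"
    using d2(2) near[OF e2 e1 ab2(1-4)] by simp
  ultimately show False using eq abs_aux unfolding d_def dist_real_def by blast
qed

lemma closure_int_dom: "T > 0 \<Longrightarrow> closure (interior (dom T)) = dom T"
  by (simp add: dom_def interior_Times closure_Times)

lemma schwarz: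
  assumes T: "T > 0" and g: "smooth_on (dom T) g" and e1: "e1 \<in> Basis" and e2: "e2 \<in> Basis"
    and z: "z \<in> dom T"
  shows "dderiv (dderiv g (dom T) e1) (dom T) e2 z = dderiv (dderiv g (dom T) e2) (dom T) e1 z"
proof -
  let ?S = "dom T"
  let ?f = "\<lambda>w. dderiv (dderiv g ?S e1) ?S e2 w - dderiv (dderiv g ?S e2) ?S e1 w"
  have "continuous_on ?S ?f"
    by (intro continuous_on_diff smooth_cont smooth_dd g e1 e2)
  then have "closedin (top_of_set ?S) {w \<in> ?S. ?f w = 0}"
    by (rule continuous_closedin_preimage_constant)
  then obtain C where C: "closed C" "{w \<in> ?S. ?f w = 0} = ?S \<inter> C"
    unfolding closedin_closed by blast
  have "interior ?S \<subseteq> C"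
  proof
    fix w assume w: "w \<in> interior ?S"
    then have "w \<in> ?S" using interior_subset by blast
    moreover have "?f w = 0" using schwarz_interior[OF T g e1 e2 w] by simp
    ultimately have "w \<in> {w \<in> ?S. ?f w = 0}" by blast
    then show "w \<in> C" using C(2) by blast
  qed
  then have "closure (interior ?S) \<subseteq> C" using C(1) by (rule closure_minimal)
  then have "dom T \<subseteq> C" using closure_int_dom[OF T] by simp
  then have "z \<in> C" using z by (rule subsetD)
  then have "z \<in> {w \<in> ?S. ?f w = 0}" using C(2) z by (simp only: Int_iff) 
  then have "?f z = 0" by simp
  then show ?thesis by simp
qed



context
  fixes T :: real
  assumes T: "T > 0"
begin

lemma hd_of: "smooth_on (dom T) f \<Longrightarrow> z \<in> dom T \<Longrightarrow> e \<in> Basis \<Longrightarrow> HD T f e z (dderiv f (dom T) e z)"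
  using smooth_ex[of "dom T" f e z] dd_HD[OF T, of z e f] unfolding HD_def by blast

lemma smooth_add: "smooth_on (dom T) f \<Longrightarrow> smooth_on (dom T) g \<Longrightarrow> smooth_on (dom T) (\<lambda>w. f w + g w)"
  by (rule PP_smooth[OF T], rule PP.add; rule PP.sm)
lemma smooth_mult: "smooth_on (dom T) f \<Longrightarrow> smooth_on (dom T) g \<Longrightarrow> smooth_on (dom T) (\<lambda>w. f w * g w)"
  by (rule PP_smooth[OF T], rule PP.mult; rule PP.sm)
lemma smooth_const: "smooth_on (dom T) (\<lambda>w. c)"
  by (rule PP_smooth[OF T], rule PP.const)
lemma smooth_lin: "bounded_linear L \<Longrightarrow> smooth_on (dom T) L"
  by (rule PP_smooth[OF T], rule PP.lin)
lemma smooth_cmult: "smooth_on (dom T) f \<Longrightarrow> smooth_on (dom T) (\<lambda>w. c * f w)"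
  by (rule PP_smooth[OF T], rule PP.mult, rule PP.const, rule PP.sm)
lemma smooth_diff: "smooth_on (dom T) f \<Longrightarrow> smooth_on (dom T) g \<Longrightarrow> smooth_on (dom T) (\<lambda>w. f w - g w)"
proof -
  assume f: "smooth_on (dom T) f" and g: "smooth_on (dom T) g"
  have "smooth_on (dom T) (\<lambda>w. f w + (-1) * g w)"
    by (rule smooth_add[OF f smooth_cmult[OF g]])
  then show ?thesis by simp
qed
lemma smooth_sum: "finite K \<Longrightarrow> (\<And>k. k \<in> K \<Longrightarrow> smooth_on (dom T) (f k)) \<Longrightarrow>
    smooth_on (dom T) (\<lambda>w. \<Sum>k\<in>K. f k w)"
proof (induction K rule: finite_induct)
  case empty then show ?case using smooth_const by simp
next
  case (insert a K)
  then show ?case by (simp add: smooth_add)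
qed

lemma dd_add:
  assumes "smooth_on (dom T) f" "smooth_on (dom T) g" "z \<in> dom T" "e \<in> Basis"
  shows "dderiv (\<lambda>w. f w + g w) (dom T) e z = dderiv f (dom T) e z + dderiv g (dom T) e z"
  using hd_of[OF assms(1,3,4)] hd_of[OF assms(2,3,4)]
  by (intro dd_eq[OF T assms(3,4)]) (auto simp: HD_def intro!: DERIV_add)

lemma dd_mult:
  assumes "smooth_on (dom T) f" "smooth_on (dom T) g" "z \<in> dom T" "e \<in> Basis"
  shows "dderiv (\<lambda>w. f w * g w) (dom T) e z = f z * dderiv g (dom T) e z + dderiv f (dom T) e z * g z"
proof (intro dd_eq[OF T assms(3,4)])
  have "((\<lambda>h. f (z + h *\<^sub>R e) * g (z + h *\<^sub>R e)) has_real_derivative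
          dderiv f (dom T) e z * g (z + 0 *\<^sub>R e) + dderiv g (dom T) e z * f (z + 0 *\<^sub>R e))
          (at 0 within {h. z + h *\<^sub>R e \<in> dom T})"
    using hd_of[OF assms(1,3,4)] hd_of[OF assms(2,3,4)] unfolding HD_def by (intro DERIV_mult)
  then show "HD T (\<lambda>w. f w * g w) e z (f z * dderiv g (dom T) e z + dderiv f (dom T) e z * g z)"
    unfolding HD_def by (simp add: algebra_simps)
qed

lemma dd_const:
  assumes "z \<in> dom T" "e \<in> Basis"
  shows "dderiv (\<lambda>w. c) (dom T) e z = 0"
  by (intro dd_eq[OF T assms]) (simp add: HD_def)

lemma dd_lin:
  assumes "bounded_linear L" "z \<in> dom T" "e \<in> Basis"
  shows "dderiv L (dom T) e z = L e"
proof (intro dd_eq[OF T assms(2,3)])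
  have eq: "(\<lambda>h. L (z + h *\<^sub>R e)) = (\<lambda>h. L z + h * L e)"
    using assms(1) by (auto simp: bounded_linear.linear linear_add linear_scale)
  show "HD T L e z (L e)" unfolding HD_def eq
    by (auto intro!: derivative_eq_intros)
qed

lemma dd_cmult:
  assumes "smooth_on (dom T) f" "z \<in> dom T" "e \<in> Basis"
  shows "dderiv (\<lambda>w. c * f w) (dom T) e z = c * dderiv f (dom T) e z"
  using dd_mult[OF smooth_const assms(1-3), of c] dd_const[OF assms(2,3), of c] by simp

lemma dd_diff:
  assumes "smooth_on (dom T) f" "smooth_on (dom T) g" "z \<in> dom T" "e \<in> Basis"
  shows "dderiv (\<lambda>w. f w - g w) (dom T) e z = dderiv f (dom T) e z - dderiv g (dom T) e z"
proof -
  have "dderiv (\<lambda>w. f w + (-1) * g w) (dom T) e z = dderiv f (dom T) e z + dderiv (\<lambda>w. (-1) * g w) (dom T) e z"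
    by (rule dd_add[OF assms(1) smooth_cmult[OF assms(2)] assms(3,4)])
  also have "dderiv (\<lambda>w. (-1) * g w) (dom T) e z = - dderiv g (dom T) e z"
    using dd_cmult[OF assms(2-4), of "-1"] by simp
  finally show ?thesis by simp
qed

lemma dd_sum:
  assumes "finite K" "\<And>k. k \<in> K \<Longrightarrow> smooth_on (dom T) (f k)" "z \<in> dom T" "e \<in> Basis"
  shows "dderiv (\<lambda>w. \<Sum>k\<in>K. f k w) (dom T) e z = (\<Sum>k\<in>K. dderiv (f k) (dom T) e z)"
  using assms(1,2)
proof (induction K rule: finite_induct)
  case empty then show ?case using dd_const[OF assms(3,4)] by simp
next
  case (insert a K)
  have "dderiv (\<lambda>w. f a w + (\<Sum>k\<in>K. f k w)) (dom T) e z
      = dderiv (f a) (dom T) e z + dderiv (\<lambda>w. \<Sum>k\<in>K. f k w) (dom T) e z"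
  proof (rule dd_add[OF _ _ assms(3,4)])
    show "smooth_on (dom T) (f a)" using insert.prems by simp
    show "smooth_on (dom T) (\<lambda>w. \<Sum>k\<in>K. f k w)"
      using insert.prems insert.hyps by (intro smooth_sum) auto
  qed
  moreover have "dderiv (\<lambda>w. \<Sum>k\<in>K. f k w) (dom T) e z = (\<Sum>k\<in>K. dderiv (f k) (dom T) e z)"
    using insert.IH insert.prems by simp
  ultimately show ?case using insert.hyps by simp
qed

end


lemma exB: "((axis j 1, 0) :: pt) \<in> Basis" by (auto simp: Basis_pt)
lemma etB: "((0, 1) :: pt) \<in> Basis" by (auto simp: Basis_pt)
lemma memdom: "t \<in> {0..T} \<Longrightarrow> (x, t) \<in> dom T" by (simp add: dom_def)

lemma sm_iff: "smooth_s T F \<longleftrightarrow> smooth_on (dom T) (\<lambda>p. F (fst p) (snd p))"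
  by (simp add: smooth_s_def case_prod_unfold)
lemma dx_uf: "dx T j F x t = dderiv (\<lambda>p. F (fst p) (snd p)) (dom T) (axis j 1, 0) (x, t)"
  by (simp add: dx_def case_prod_unfold)
lemma dt_uf: "dt T F x t = dderiv (\<lambda>p. F (fst p) (snd p)) (dom T) (0, 1) (x, t)"
  by (simp add: dt_def case_prod_unfold)
lemma dx_fun: "(\<lambda>p. dx T j F (fst p) (snd p)) = dderiv (\<lambda>p. F (fst p) (snd p)) (dom T) (axis j 1, 0)"
  by (simp add: dx_uf)
lemma dt_fun: "(\<lambda>p. dt T F (fst p) (snd p)) = dderiv (\<lambda>p. F (fst p) (snd p)) (dom T) (0, 1)"
  by (simp add: dt_uf)

context
  fixes T :: real
  assumes T: "T > 0"
begin

lemma sm_dx: "smooth_s T F \<Longrightarrow> smooth_s T (dx T j F)"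
  unfolding sm_iff dx_fun by (rule smooth_dd[OF _ exB])
lemma sm_dt: "smooth_s T F \<Longrightarrow> smooth_s T (dt T F)"
  unfolding sm_iff dt_fun by (rule smooth_dd[OF _ etB])
lemma sm_add: "smooth_s T F \<Longrightarrow> smooth_s T G \<Longrightarrow> smooth_s T (\<lambda>x t. F x t + G x t)"
  unfolding sm_iff using smooth_add[OF T] by simp
lemma sm_mult: "smooth_s T F \<Longrightarrow> smooth_s T G \<Longrightarrow> smooth_s T (\<lambda>x t. F x t * G x t)"
  unfolding sm_iff using smooth_mult[OF T] by simp
lemma sm_diff: "smooth_s T F \<Longrightarrow> smooth_s T G \<Longrightarrow> smooth_s T (\<lambda>x t. F x t - G x t)"
  unfolding sm_iff using smooth_diff[OF T] by simp
lemma sm_cmult: "smooth_s T F \<Longrightarrow> smooth_s T (\<lambda>x t. c * F x t)"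
  unfolding sm_iff using smooth_cmult[OF T] by simp
lemma sm_const: "smooth_s T (\<lambda>x t. c)"
  unfolding sm_iff using smooth_const[OF T] by simp
lemma sm_coord: "smooth_s T (\<lambda>x t. x $ m)"
proof -
  have "bounded_linear (\<lambda>p::pt. fst p $ m)"
    by (intro bounded_linear_compose[OF bounded_linear_vec_nth bounded_linear_fst])
  then show ?thesis unfolding sm_iff using smooth_lin[OF T] by simp
qed
lemma sm_sum: "finite K \<Longrightarrow> (\<And>k. k \<in> K \<Longrightarrow> smooth_s T (F k)) \<Longrightarrow> smooth_s T (\<lambda>x t. \<Sum>k\<in>K. F k x t)"
  unfolding sm_iff using smooth_sum[OF T, of K "\<lambda>k p. F k (fst p) (snd p)"] by simp

lemma dx_add: "smooth_s T F \<Longrightarrow> smooth_s T G \<Longrightarrow> t \<in> {0..T} \<Longrightarrow>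
   dx T j (\<lambda>x t. F x t + G x t) x t = dx T j F x t + dx T j G x t"
  unfolding dx_uf sm_iff using dd_add[OF T _ _ memdom exB] by simp
lemma dt_add: "smooth_s T F \<Longrightarrow> smooth_s T G \<Longrightarrow> t \<in> {0..T} \<Longrightarrow>
   dt T (\<lambda>x t. F x t + G x t) x t = dt T F x t + dt T G x t"
  unfolding dt_uf sm_iff using dd_add[OF T _ _ memdom etB] by simp
lemma dx_diff: "smooth_s T F \<Longrightarrow> smooth_s T G \<Longrightarrow> t \<in> {0..T} \<Longrightarrow>
   dx T j (\<lambda>x t. F x t - G x t) x t = dx T j F x t - dx T j G x t"
  unfolding dx_uf sm_iff using dd_diff[OF T _ _ memdom exB] by simp
lemma dt_diff: "smooth_s T F \<Longrightarrow> smooth_s T G \<Longrightarrow> t \<in> {0..T} \<Longrightarrow>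
   dt T (\<lambda>x t. F x t - G x t) x t = dt T F x t - dt T G x t"
  unfolding dt_uf sm_iff using dd_diff[OF T _ _ memdom etB] by simp
lemma dx_mult: "smooth_s T F \<Longrightarrow> smooth_s T G \<Longrightarrow> t \<in> {0..T} \<Longrightarrow>
   dx T j (\<lambda>x t. F x t * G x t) x t = F x t * dx T j G x t + dx T j F x t * G x t"
  unfolding dx_uf sm_iff using dd_mult[OF T _ _ memdom exB] by simp
lemma dt_mult: "smooth_s T F \<Longrightarrow> smooth_s T G \<Longrightarrow> t \<in> {0..T} \<Longrightarrow>
   dt T (\<lambda>x t. F x t * G x t) x t = F x t * dt T G x t + dt T F x t * G x t"
  unfolding dt_uf sm_iff using dd_mult[OF T _ _ memdom etB] by simp
lemma dx_cmult: "smooth_s T F \<Longrightarrow> t \<in> {0..T} \<Longrightarrow>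
   dx T j (\<lambda>x t. c * F x t) x t = c * dx T j F x t"
  unfolding dx_uf sm_iff using dd_cmult[OF T _ memdom exB] by simp
lemma dt_cmult: "smooth_s T F \<Longrightarrow> t \<in> {0..T} \<Longrightarrow>
   dt T (\<lambda>x t. c * F x t) x t = c * dt T F x t"
  unfolding dt_uf sm_iff using dd_cmult[OF T _ memdom etB] by simp
lemma dx_const: "t \<in> {0..T} \<Longrightarrow> dx T j (\<lambda>x t. c) x t = 0"
  unfolding dx_uf using dd_const[OF T memdom exB] by simp
lemma dt_const: "t \<in> {0..T} \<Longrightarrow> dt T (\<lambda>x t. c) x t = 0"
  unfolding dt_uf using dd_const[OF T memdom etB] by simp
lemma dx_sum: "finite K \<Longrightarrow> (\<And>k. k \<in> K \<Longrightarrow> smooth_s T (F k)) \<Longrightarrow> t \<in> {0..T} \<Longrightarrow>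
   dx T j (\<lambda>x t. \<Sum>k\<in>K. F k x t) x t = (\<Sum>k\<in>K. dx T j (F k) x t)"
  unfolding dx_uf sm_iff using dd_sum[OF T _ _ memdom exB, of K "\<lambda>k p. F k (fst p) (snd p)"] by simp
lemma dt_sum: "finite K \<Longrightarrow> (\<And>k. k \<in> K \<Longrightarrow> smooth_s T (F k)) \<Longrightarrow> t \<in> {0..T} \<Longrightarrow>
   dt T (\<lambda>x t. \<Sum>k\<in>K. F k x t) x t = (\<Sum>k\<in>K. dt T (F k) x t)"
  unfolding dt_uf sm_iff using dd_sum[OF T _ _ memdom etB, of K "\<lambda>k p. F k (fst p) (snd p)"] by simp

lemma blin_coord: "bounded_linear (\<lambda>p::pt. fst p $ m)"
  by (intro bounded_linear_compose[OF bounded_linear_vec_nth bounded_linear_fst])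

lemma dx_coord: "t \<in> {0..T} \<Longrightarrow> dx T j (\<lambda>x t. x $ m) x t = (if m = j then 1 else 0)"
  unfolding dx_uf using dd_lin[OF T blin_coord memdom exB] by (simp add: axis_def)
lemma dt_coord: "t \<in> {0..T} \<Longrightarrow> dt T (\<lambda>x t. x $ m) x t = 0"
  unfolding dt_uf using dd_lin[OF T blin_coord memdom etB] by simp

lemma dx_cong: "(\<And>y s. s \<in> {0..T} \<Longrightarrow> F y s = G y s) \<Longrightarrow> t \<in> {0..T} \<Longrightarrow> dx T j F x t = dx T j G x t"
  unfolding dx_uf by (rule dd_cong[OF memdom]) (auto simp: dom_def)
lemma dt_cong: "(\<And>y s. s \<in> {0..T} \<Longrightarrow> F y s = G y s) \<Longrightarrow> t \<in> {0..T} \<Longrightarrow> dt T F x t = dt T G x t"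
  unfolding dt_uf by (rule dd_cong[OF memdom]) (auto simp: dom_def)

lemma dx_comm: "smooth_s T F \<Longrightarrow> t \<in> {0..T} \<Longrightarrow> dx T i (dx T j F) x t = dx T j (dx T i F) x t"
  unfolding dx_uf[of T i "dx T j F"] dx_uf[of T j "dx T i F"] dx_fun sm_iff
  by (rule schwarz[OF T _ exB exB memdom])
lemma dxdt_comm: "smooth_s T F \<Longrightarrow> t \<in> {0..T} \<Longrightarrow> dx T i (dt T F) x t = dt T (dx T i F) x t"
  unfolding dx_uf[of T i "dt T F"] dt_uf[of T "dx T i F"] dx_fun dt_fun sm_iff
  by (rule schwarz[OF T _ etB exB memdom])

end


context
  fixes T :: real
  assumes T: "T > 0"
begin

lemma Gam_expand: "Gam T \<nu> u F x t = dt T F x t + (\<Sum>k\<in>UNIV. u x t $ k * dx T k F x t) - \<nu> * (\<Sum>k\<in>UNIV. dx T k (dx T k F) x t)"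
  by (simp add: Gam_def lap_def)

lemma Gam_fun: "Gam T \<nu> u F = (\<lambda>x t. dt T F x t + (\<Sum>k\<in>UNIV. u x t $ k * dx T k F x t) - \<nu> * (\<Sum>k\<in>UNIV. dx T k (dx T k F) x t))"
  by (simp add: Gam_def lap_def fun_eq_iff)

lemma d2_add:
  assumes F: "smooth_s T F" and G: "smooth_s T G" and t: "t \<in> {0..T}"
  shows "dx T k (dx T k (\<lambda>x t. F x t + G x t)) x t = dx T k (dx T k F) x t + dx T k (dx T k G) x t"
proof -
  have "dx T k (dx T k (\<lambda>x t. F x t + G x t)) x t = dx T k (\<lambda>x t. dx T k F x t + dx T k G x t) x t"
    by (rule dx_cong[OF T _ t], rule dx_add[OF T F G])
  also have "\<dots> = dx T k (dx T k F) x t + dx T k (dx T k G) x t"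
    by (rule dx_add[OF T sm_dx[OF T F] sm_dx[OF T G] t])
  finally show ?thesis .
qed

lemma d2_diff:
  assumes F: "smooth_s T F" and G: "smooth_s T G" and t: "t \<in> {0..T}"
  shows "dx T k (dx T k (\<lambda>x t. F x t - G x t)) x t = dx T k (dx T k F) x t - dx T k (dx T k G) x t"
proof -
  have "dx T k (dx T k (\<lambda>x t. F x t - G x t)) x t = dx T k (\<lambda>x t. dx T k F x t - dx T k G x t) x t"
    by (rule dx_cong[OF T _ t], rule dx_diff[OF T F G])
  also have "\<dots> = dx T k (dx T k F) x t - dx T k (dx T k G) x t"
    by (rule dx_diff[OF T sm_dx[OF T F] sm_dx[OF T G] t])
  finally show ?thesis .
qed

lemma d2_sum:
  assumes K: "finite K" and F: "\<And>m. m \<in> K \<Longrightarrow> smooth_s T (F m)" and t: "t \<in> {0..T}"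
  shows "dx T k (dx T k (\<lambda>x t. \<Sum>m\<in>K. F m x t)) x t = (\<Sum>m\<in>K. dx T k (dx T k (F m)) x t)"
proof -
  have "dx T k (dx T k (\<lambda>x t. \<Sum>m\<in>K. F m x t)) x t = dx T k (\<lambda>x t. \<Sum>m\<in>K. dx T k (F m) x t) x t"
    by (rule dx_cong[OF T _ t], rule dx_sum[OF T K F])
  also have "\<dots> = (\<Sum>m\<in>K. dx T k (dx T k (F m)) x t)"
    by (rule dx_sum[OF T K _ t], rule sm_dx[OF T F])
  finally show ?thesis .
qed

lemma d2_mult:
  assumes F: "smooth_s T F" and G: "smooth_s T G" and t: "t \<in> {0..T}"
  shows "dx T k (dx T k (\<lambda>x t. F x t * G x t)) x t =
     F x t * dx T k (dx T k G) x t + 2 * (dx T k F x t * dx T k G x t) + dx T k (dx T k F) x t * G x t"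
proof -
  have "dx T k (dx T k (\<lambda>x t. F x t * G x t)) x t
      = dx T k (\<lambda>x t. (\<lambda>x t. F x t * dx T k G x t) x t + (\<lambda>x t. dx T k F x t * G x t) x t) x t"
    by (rule dx_cong[OF T _ t], rule dx_mult[OF T F G])
  also have "\<dots> = dx T k (\<lambda>x t. F x t * dx T k G x t) x t + dx T k (\<lambda>x t. dx T k F x t * G x t) x t"
    by (rule dx_add[OF T sm_mult[OF T F sm_dx[OF T G]] sm_mult[OF T sm_dx[OF T F] G] t])
  also have "\<dots> = F x t * dx T k (dx T k G) x t + 2 * (dx T k F x t * dx T k G x t) + dx T k (dx T k F) x t * G x t"
    using dx_mult[OF T F sm_dx[OF T G] t, of k] dx_mult[OF T sm_dx[OF T F] G t, of k]
    by (simp add: algebra_simps)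
  finally show ?thesis .
qed

lemma Gam_add:
  assumes F: "smooth_s T F" and G: "smooth_s T G" and t: "t \<in> {0..T}"
  shows "Gam T \<nu> u (\<lambda>x t. F x t + G x t) x t = Gam T \<nu> u F x t + Gam T \<nu> u G x t"
  unfolding Gam_expand dt_add[OF T F G t] dx_add[OF T F G t] d2_add[OF F G t]
  by (simp add: sum.distrib algebra_simps)

lemma Gam_diff:
  assumes F: "smooth_s T F" and G: "smooth_s T G" and t: "t \<in> {0..T}"
  shows "Gam T \<nu> u (\<lambda>x t. F x t - G x t) x t = Gam T \<nu> u F x t - Gam T \<nu> u G x t"
  unfolding Gam_expand dt_diff[OF T F G t] dx_diff[OF T F G t] d2_diff[OF F G t]
  by (simp add: sum_subtractf algebra_simps)

lemma Gam_sum: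
  assumes K: "finite K" and F: "\<And>m. m \<in> K \<Longrightarrow> smooth_s T (F m)" and t: "t \<in> {0..T}"
  shows "Gam T \<nu> u (\<lambda>x t. \<Sum>m\<in>K. F m x t) x t = (\<Sum>m\<in>K. Gam T \<nu> u (F m) x t)"
proof -
  note A = dt_sum[OF T K F t] dx_sum[OF T K F t] d2_sum[OF K F t]
  show ?thesis
  proof -
    have R: "(\<Sum>m\<in>K. Gam T \<nu> u (F m) x t) = (\<Sum>m\<in>K. dt T (F m) x t)
      + (\<Sum>m\<in>K. \<Sum>k\<in>UNIV. u x t $ k * dx T k (F m) x t) - \<nu> * (\<Sum>m\<in>K. \<Sum>k\<in>UNIV. dx T k (dx T k (F m)) x t)"
      by (simp add: Gam_expand sum.distrib sum_subtractf sum_distrib_left)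
    have S1: "(\<Sum>k\<in>UNIV. u x t $ k * (\<Sum>m\<in>K. dx T k (F m) x t)) = (\<Sum>m\<in>K. \<Sum>k\<in>UNIV. u x t $ k * dx T k (F m) x t)"
      by (simp add: sum_distrib_left sum.swap[of _ UNIV K])
    have S2: "(\<Sum>k\<in>UNIV. \<Sum>m\<in>K. dx T k (dx T k (F m)) x t) = (\<Sum>m\<in>K. \<Sum>k\<in>UNIV. dx T k (dx T k (F m)) x t)"
      by (rule sum.swap)
    show ?thesis unfolding R by (simp only: Gam_expand A S1 S2)
  qed
qed

lemma Gam_mult:
  assumes F: "smooth_s T F" and G: "smooth_s T G" and t: "t \<in> {0..T}"
  shows "Gam T \<nu> u (\<lambda>x t. F x t * G x t) x t =
    F x t * Gam T \<nu> u G x t + G x t * Gam T \<nu> u F x t - 2 * \<nu> * (\<Sum>k\<in>UNIV. dx T k F x t * dx T k G x t)"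
proof -
  have S1: "(\<Sum>k\<in>UNIV. u x t $ k * dx T k (\<lambda>x t. F x t * G x t) x t)
      = F x t * (\<Sum>k\<in>UNIV. u x t $ k * dx T k G x t) + G x t * (\<Sum>k\<in>UNIV. u x t $ k * dx T k F x t)"
    by (simp add: dx_mult[OF T F G t] sum_distrib_left sum.distrib algebra_simps)
  have S2: "(\<Sum>k\<in>UNIV. dx T k (dx T k (\<lambda>x t. F x t * G x t)) x t)
      = F x t * (\<Sum>k\<in>UNIV. dx T k (dx T k G) x t) + G x t * (\<Sum>k\<in>UNIV. dx T k (dx T k F) x t)
        + 2 * (\<Sum>k\<in>UNIV. dx T k F x t * dx T k G x t)"
    by (simp add: d2_mult[OF F G t] sum_distrib_left sum.distrib algebra_simps)
  show ?thesis
    unfolding Gam_expand S1 S2 dt_mult[OF T F G t] by (simp add: algebra_simps)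
qed

lemma Gam_const:
  assumes t: "t \<in> {0..T}"
  shows "Gam T \<nu> u (\<lambda>x t. c) x t = 0"
proof -
  have "dx T k (dx T k (\<lambda>x t. c)) x t = 0" for k
  proof -
    have "dx T k (dx T k (\<lambda>x t. c)) x t = dx T k (\<lambda>x t. 0) x t"
      by (rule dx_cong[OF T _ t], rule dx_const[OF T])
    then show ?thesis using dx_const[OF T t] by simp
  qed
  then show ?thesis unfolding Gam_expand using dt_const[OF T t] dx_const[OF T t] by simp
qed

lemma Gam_coord:
  assumes t: "t \<in> {0..T}"
  shows "Gam T \<nu> u (\<lambda>x t. x $ m) x t = u x t $ m"
proof -
  have "dx T k (dx T k (\<lambda>x t. x $ m)) x t = 0" for k
  proof -
    have "dx T k (dx T k (\<lambda>x t. x $ m)) x t = dx T k (\<lambda>x t. if m = k then 1 else 0) x t"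
      by (rule dx_cong[OF T _ t], rule dx_coord[OF T])
    then show ?thesis using dx_const[OF T t] by simp
  qed
  moreover have "(\<Sum>k\<in>UNIV. u x t $ k * dx T k (\<lambda>x t. x $ m) x t) = u x t $ m"
  proof -
    have "(\<Sum>k\<in>UNIV. u x t $ k * dx T k (\<lambda>x t. x $ m) x t) = (\<Sum>k\<in>UNIV. if k = m then u x t $ k else 0)"
      by (rule sum.cong[OF refl]) (simp add: dx_coord[OF T t])
    then show ?thesis by simp
  qed
  ultimately show ?thesis unfolding Gam_expand using dt_coord[OF T t] by simp
qed

lemma Gam_cong:
  assumes eq: "\<And>y s. s \<in> {0..T} \<Longrightarrow> F y s = G y s" and t: "t \<in> {0..T}"
  shows "Gam T \<nu> u F x t = Gam T \<nu> u G x t"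
proof -
  have "dx T k (dx T k F) x t = dx T k (dx T k G) x t" for k
    by (rule dx_cong[OF T _ t], rule dx_cong[OF T eq])
  then show ?thesis unfolding Gam_expand using dt_cong[OF T eq t] dx_cong[OF T eq t] by simp
qed

lemma Gam_dx:
  assumes u: "smooth_v T u" and F: "smooth_s T F" and t: "t \<in> {0..T}"
  shows "dx T i (Gam T \<nu> u F) x t = Gam T \<nu> u (dx T i F) x t + (\<Sum>k\<in>UNIV. dx T i (comp u k) x t * dx T k F x t)"
proof -
  have uk: "smooth_s T (comp u k)" for k using u by (simp add: smooth_v_def comp_def)
  have cu: "(\<lambda>x t. u x t $ k) = comp u k" for k by (simp add: comp_def fun_eq_iff)
  have sm1: "smooth_s T (\<lambda>x t. \<Sum>k\<in>UNIV. comp u k x t * dx T k F x t)"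
    by (rule sm_sum[OF T], simp, rule sm_mult[OF T uk sm_dx[OF T F]])
  have sm2: "smooth_s T (\<lambda>x t. \<Sum>k\<in>UNIV. dx T k (dx T k F) x t)"
    by (rule sm_sum[OF T], simp, rule sm_dx[OF T sm_dx[OF T F]])
  have GF: "Gam T \<nu> u F = (\<lambda>x t. (\<lambda>x t. dt T F x t + (\<Sum>k\<in>UNIV. comp u k x t * dx T k F x t)) x t
      - (\<lambda>x t. \<nu> * (\<Sum>k\<in>UNIV. dx T k (dx T k F) x t)) x t)"
    by (simp add: Gam_fun comp_def)
  have "dx T i (Gam T \<nu> u F) x t
     = dx T i (\<lambda>x t. dt T F x t + (\<Sum>k\<in>UNIV. comp u k x t * dx T k F x t)) x t
       - dx T i (\<lambda>x t. \<nu> * (\<Sum>k\<in>UNIV. dx T k (dx T k F) x t)) x t"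
    unfolding GF
    by (rule dx_diff[OF T sm_add[OF T sm_dt[OF T F] sm1] sm_cmult[OF T sm2] t])
  also have "dx T i (\<lambda>x t. dt T F x t + (\<Sum>k\<in>UNIV. comp u k x t * dx T k F x t)) x t
      = dx T i (dt T F) x t + dx T i (\<lambda>x t. \<Sum>k\<in>UNIV. comp u k x t * dx T k F x t) x t"
    by (rule dx_add[OF T sm_dt[OF T F] sm1 t])
  also have "dx T i (\<lambda>x t. \<Sum>k\<in>UNIV. comp u k x t * dx T k F x t) x t
      = (\<Sum>k\<in>UNIV. dx T i (\<lambda>x t. comp u k x t * dx T k F x t) x t)"
    by (rule dx_sum[OF T _ _ t], simp, rule sm_mult[OF T uk sm_dx[OF T F]])
  also have "\<dots> = (\<Sum>k\<in>UNIV. comp u k x t * dx T i (dx T k F) x t + dx T i (comp u k) x t * dx T k F x t)"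
    by (rule sum.cong[OF refl], rule dx_mult[OF T uk sm_dx[OF T F] t])
  also have "dx T i (\<lambda>x t. \<nu> * (\<Sum>k\<in>UNIV. dx T k (dx T k F) x t)) x t
      = \<nu> * dx T i (\<lambda>x t. \<Sum>k\<in>UNIV. dx T k (dx T k F) x t) x t"
    by (rule dx_cmult[OF T sm2 t])
  also have "dx T i (\<lambda>x t. \<Sum>k\<in>UNIV. dx T k (dx T k F) x t) x t = (\<Sum>k\<in>UNIV. dx T i (dx T k (dx T k F)) x t)"
    by (rule dx_sum[OF T _ _ t], simp, rule sm_dx[OF T sm_dx[OF T F]])
  finally have A: "dx T i (Gam T \<nu> u F) x t =
       dx T i (dt T F) x t + (\<Sum>k\<in>UNIV. comp u k x t * dx T i (dx T k F) x t + dx T i (comp u k) x t * dx T k F x t)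
       - \<nu> * (\<Sum>k\<in>UNIV. dx T i (dx T k (dx T k F)) x t)" .
  have c1: "dx T i (dx T k F) x t = dx T k (dx T i F) x t" for k by (rule dx_comm[OF T F t])
  have c2: "dx T i (dx T k (dx T k F)) x t = dx T k (dx T k (dx T i F)) x t" for k
  proof -
    have "dx T i (dx T k (dx T k F)) x t = dx T k (dx T i (dx T k F)) x t"
      by (rule dx_comm[OF T sm_dx[OF T F] t])
    also have "\<dots> = dx T k (dx T k (dx T i F)) x t"
      by (rule dx_cong[OF T _ t], rule dx_comm[OF T F])
    finally show ?thesis .
  qed
  show ?thesis
    unfolding A Gam_expand c1 c2 dxdt_comm[OF T F t]
    by (simp add: sum.distrib comp_def algebra_simps)
qed

end


lemma sm_Gam:
  assumes T: "T > 0" and u: "smooth_v T u" and F: "smooth_s T F"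
  shows "smooth_s T (Gam T \<nu> u F)"
proof -
  have uk: "smooth_s T (comp u k)" for k using u by (simp add: smooth_v_def comp_def)
  have "smooth_s T (\<lambda>x t. (dt T F x t + (\<Sum>k\<in>UNIV. comp u k x t * dx T k F x t)) - \<nu> * (\<Sum>k\<in>UNIV. dx T k (dx T k F) x t))"
    by (intro sm_diff[OF T] sm_add[OF T] sm_cmult[OF T] sm_dt[OF T F] sm_sum[OF T] sm_mult[OF T] uk sm_dx[OF T] F finite)
  then show ?thesis by (simp add: Gam_fun[OF T] comp_def)
qed

lemma inv_left:
  fixes M :: "real^3^3"
  assumes "invertible M"
  shows "matrix_inv M ** M = mat 1"
  using assms unfolding invertible_def matrix_inv_def by (rule someI2_ex) auto

theorem proposition1:
  fixes \<nu> T c :: real and u l v f A :: vfield and n p :: sfield and Q :: "real^3 \<Rightarrow> real \<Rightarrow> real^3^3"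
    and C :: "3 \<Rightarrow> 3 \<Rightarrow> 3 \<Rightarrow> sfield"
  assumes nu_pos: "\<nu> > 0" and T_pos: "T > 0"
    and smooth: "smooth_v T u" "smooth_v T l" "smooth_v T v" "smooth_s T n" "smooth_v T f"
    and A_def: "A = (\<lambda>x t. x + l x t)"
    and inv: "\<And>x t. t \<in> {0..T} \<Longrightarrow> invertible (gradm T A x t)"
    and Q_def: "Q = (\<lambda>x t. matrix_inv (gradm T A x t))"
    and C_def: "C = (\<lambda>m k i x t. \<Sum>j\<in>UNIV. Q x t $ j $ i * dx T j (dx T k (comp A m)) x t)"
    and hu: "\<And>x t i. t \<in> {0..T} \<Longrightarrow>
               u x t $ i = (\<Sum>m\<in>UNIV. dx T i (comp A m) x t * v x t $ m) - dx T i n x t"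
    and hl: "\<And>x t i. t \<in> {0..T} \<Longrightarrow>
               Gam T \<nu> u (comp l i) x t + u x t $ i = 0"
    and hv: "\<And>x t i. t \<in> {0..T} \<Longrightarrow>
               Gam T \<nu> u (comp v i) x t =
                 2 * \<nu> * (\<Sum>m\<in>UNIV. \<Sum>k\<in>UNIV. C m k i x t * dx T k (comp v m) x t)
                 + (\<Sum>j\<in>UNIV. Q x t $ j $ i * f x t $ j)"
    and p_def: "p = (\<lambda>x t. Gam T \<nu> u n x t + (norm (u x t))\<^sup>2 / 2 + c)"
  shows "\<And>x t i. t \<in> {0..T} \<Longrightarrow>
           dt T (comp u i) x t + (\<Sum>k\<in>UNIV. u x t $ k * dx T k (comp u i) x t)
             - \<nu> * lap T (comp u i) x t + dx T i p x t = f x t $ i"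
proof -
  fix x t i assume t: "t \<in> {0..T}"
  note T = T_pos
  have su: "smooth_s T (comp u k)" for k using smooth(1) by (simp add: smooth_v_def comp_def)
  have sl: "smooth_s T (comp l k)" for k using smooth(2) by (simp add: smooth_v_def comp_def)
  have sv: "smooth_s T (comp v k)" for k using smooth(3) by (simp add: smooth_v_def comp_def)
  have sn: "smooth_s T n" by (rule smooth(4))
  have cA: "comp A m = (\<lambda>x t. x $ m + comp l m x t)" for m by (simp add: A_def comp_def fun_eq_iff)
  have sA: "smooth_s T (comp A m)" for m unfolding cA by (rule sm_add[OF T sm_coord[OF T] sl])
  define B where "B i m = dx T i (comp A m)" for i m
  have sB: "smooth_s T (B i m)" for i m unfolding B_def by (rule sm_dx[OF T sA])
  have cu: "u y s $ k = comp u k y s" for y s k by (simp add: comp_def)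
  have cv: "v y s $ k = comp v k y s" for y s k by (simp add: comp_def)

  have GA0: "Gam T \<nu> u (comp A m) y s = 0" if s: "s \<in> {0..T}" for y s m
  proof -
    have "Gam T \<nu> u (comp A m) y s = Gam T \<nu> u (\<lambda>x t. x $ m) y s + Gam T \<nu> u (comp l m) y s"
      unfolding cA by (rule Gam_add[OF T sm_coord[OF T] sl s])
    also have "\<dots> = u y s $ m + Gam T \<nu> u (comp l m) y s" using Gam_coord[OF T s] by simp
    also have "\<dots> = 0" using hl[OF s, where x=y and i=m] by simp
    finally show ?thesis .
  qed
  have GB: "Gam T \<nu> u (B i m) x t = - (\<Sum>k\<in>UNIV. dx T i (comp u k) x t * B k m x t)" for m
  proof -
    have "dx T i (Gam T \<nu> u (comp A m)) x t = dx T i (\<lambda>x t. 0) x t"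
      by (rule dx_cong[OF T _ t], rule GA0)
    then have "dx T i (Gam T \<nu> u (comp A m)) x t = 0" using dx_const[OF T t] by simp
    then show ?thesis using Gam_dx[OF T smooth(1) sA t, of i \<nu>] unfolding B_def by simp
  qed
  have Gn: "Gam T \<nu> u (dx T i n) x t = dx T i (Gam T \<nu> u n) x t - (\<Sum>k\<in>UNIV. dx T i (comp u k) x t * dx T k n x t)"
    using Gam_dx[OF T smooth(1) sn t, of i \<nu>] by simp

  have K1: "(\<Sum>m\<in>UNIV. Q x t $ j $ m * B i m x t) = (if j = i then 1 else 0)" for j
  proof -
    have "(matrix_inv (gradm T A x t) ** gradm T A x t) $ j $ i = mat 1 $ j $ i"
      using inv_left[OF inv[OF t]] by simp
    then show ?thesis
      by (simp add: Q_def B_def matrix_matrix_mult_def gradm_def mat_def)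
  qed
  have K1': "(\<Sum>m\<in>UNIV. B i m x t * (\<Sum>j\<in>UNIV. Q x t $ j $ m * X j)) = X i" for X :: "3 \<Rightarrow> real"
  proof -
    have "(\<Sum>m\<in>UNIV. B i m x t * (\<Sum>j\<in>UNIV. Q x t $ j $ m * X j))
        = (\<Sum>m\<in>UNIV. \<Sum>j\<in>UNIV. X j * (Q x t $ j $ m * B i m x t))"
      by (simp add: sum_distrib_left algebra_simps)
    also have "\<dots> = (\<Sum>j\<in>UNIV. \<Sum>m\<in>UNIV. X j * (Q x t $ j $ m * B i m x t))"
      by (rule sum.swap)
    also have "\<dots> = (\<Sum>j\<in>UNIV. X j * (if j = i then 1 else 0))"
      by (simp add: sum_distrib_left[symmetric] K1)
    also have "\<dots> = X i" by (simp add: if_distrib cong: if_cong)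
    finally show ?thesis .
  qed
  have K3: "(\<Sum>m\<in>UNIV. B i m x t * C q k m x t) = dx T k (B i q) x t" for q k
  proof -
    have "(\<Sum>m\<in>UNIV. B i m x t * C q k m x t) = dx T i (dx T k (comp A q)) x t"
      unfolding C_def using K1'[of "\<lambda>j. dx T j (dx T k (comp A q)) x t"] by simp
    also have "\<dots> = dx T k (B i q) x t" unfolding B_def by (rule dx_comm[OF T sA t])
    finally show ?thesis .
  qed
  have K4: "(\<Sum>m\<in>UNIV. B i m x t * Gam T \<nu> u (comp v m) x t)
      = 2 * \<nu> * (\<Sum>q\<in>UNIV. \<Sum>k\<in>UNIV. dx T k (B i q) x t * dx T k (comp v q) x t) + f x t $ i"
  proof -
    have "(\<Sum>m\<in>UNIV. B i m x t * Gam T \<nu> u (comp v m) x t)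
       = 2 * \<nu> * (\<Sum>m\<in>UNIV. B i m x t * (\<Sum>q\<in>UNIV. \<Sum>k\<in>UNIV. C q k m x t * dx T k (comp v q) x t))
         + (\<Sum>m\<in>UNIV. B i m x t * (\<Sum>j\<in>UNIV. Q x t $ j $ m * f x t $ j))"
      by (simp add: hv[OF t] sum.distrib sum_distrib_left algebra_simps)
    also have "(\<Sum>m\<in>UNIV. B i m x t * (\<Sum>j\<in>UNIV. Q x t $ j $ m * f x t $ j)) = f x t $ i"
      by (rule K1')
    also have "(\<Sum>m\<in>UNIV. B i m x t * (\<Sum>q\<in>UNIV. \<Sum>k\<in>UNIV. C q k m x t * dx T k (comp v q) x t))
        = (\<Sum>m\<in>UNIV. \<Sum>q\<in>UNIV. \<Sum>k\<in>UNIV. B i m x t * C q k m x t * dx T k (comp v q) x t)"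
      by (simp add: sum_distrib_left mult.assoc)
    also have "\<dots> = (\<Sum>q\<in>UNIV. \<Sum>m\<in>UNIV. \<Sum>k\<in>UNIV. B i m x t * C q k m x t * dx T k (comp v q) x t)"
      by (rule sum.swap)
    also have "\<dots> = (\<Sum>q\<in>UNIV. \<Sum>k\<in>UNIV. \<Sum>m\<in>UNIV. B i m x t * C q k m x t * dx T k (comp v q) x t)"
      by (rule sum.cong[OF refl], rule sum.swap)
    also have "\<dots> = (\<Sum>q\<in>UNIV. \<Sum>k\<in>UNIV. (\<Sum>m\<in>UNIV. B i m x t * C q k m x t) * dx T k (comp v q) x t)"
      by (simp add: sum_distrib_right)
    also have "\<dots> = (\<Sum>q\<in>UNIV. \<Sum>k\<in>UNIV. dx T k (B i q) x t * dx T k (comp v q) x t)"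
      by (simp add: K3)
    finally show ?thesis .
  qed

  have U_eq: "comp u i y s = (\<lambda>x t. (\<Sum>m\<in>UNIV. B i m x t * comp v m x t) - dx T i n x t) y s"
    if s: "s \<in> {0..T}" for y s
    using hu[OF s, of y i] by (simp add: B_def comp_def)
  have smBv: "smooth_s T (\<lambda>x t. B i m x t * comp v m x t)" for m by (rule sm_mult[OF T sB sv])
  have "Gam T \<nu> u (comp u i) x t = Gam T \<nu> u (\<lambda>x t. (\<Sum>m\<in>UNIV. B i m x t * comp v m x t) - dx T i n x t) x t"
    by (rule Gam_cong[OF T U_eq t])
  also have "\<dots> = Gam T \<nu> u (\<lambda>x t. \<Sum>m\<in>UNIV. B i m x t * comp v m x t) x t - Gam T \<nu> u (dx T i n) x t"
    by (rule Gam_diff[OF T sm_sum[OF T finite smBv] sm_dx[OF T sn] t])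
  also have "Gam T \<nu> u (\<lambda>x t. \<Sum>m\<in>UNIV. B i m x t * comp v m x t) x t
      = (\<Sum>m\<in>UNIV. Gam T \<nu> u (\<lambda>x t. B i m x t * comp v m x t) x t)"
    by (rule Gam_sum[OF T finite smBv t])
  also have "\<dots> = (\<Sum>m\<in>UNIV. B i m x t * Gam T \<nu> u (comp v m) x t
       + comp v m x t * Gam T \<nu> u (B i m) x t
       - 2 * \<nu> * (\<Sum>k\<in>UNIV. dx T k (B i m) x t * dx T k (comp v m) x t))"
    by (rule sum.cong[OF refl], rule Gam_mult[OF T sB sv t])
  also have "\<dots> = (\<Sum>m\<in>UNIV. B i m x t * Gam T \<nu> u (comp v m) x t)
       + (\<Sum>m\<in>UNIV. comp v m x t * Gam T \<nu> u (B i m) x t)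
       - 2 * \<nu> * (\<Sum>m\<in>UNIV. \<Sum>k\<in>UNIV. dx T k (B i m) x t * dx T k (comp v m) x t)"
    by (simp add: sum.distrib sum_subtractf sum_distrib_left)
  also have "(\<Sum>m\<in>UNIV. comp v m x t * Gam T \<nu> u (B i m) x t)
      = - (\<Sum>k\<in>UNIV. dx T i (comp u k) x t * (\<Sum>m\<in>UNIV. B k m x t * comp v m x t))"
  proof -
    have "(\<Sum>m\<in>UNIV. comp v m x t * Gam T \<nu> u (B i m) x t)
        = - (\<Sum>m\<in>UNIV. \<Sum>k\<in>UNIV. dx T i (comp u k) x t * (B k m x t * comp v m x t))"
      by (simp add: GB sum_distrib_left sum_negf algebra_simps)
    also have "\<dots> = - (\<Sum>k\<in>UNIV. \<Sum>m\<in>UNIV. dx T i (comp u k) x t * (B k m x t * comp v m x t))"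
      by (subst sum.swap) (rule refl)
    also have "\<dots> = - (\<Sum>k\<in>UNIV. dx T i (comp u k) x t * (\<Sum>m\<in>UNIV. B k m x t * comp v m x t))"
      by (simp add: sum_distrib_left)
    finally show ?thesis .
  qed
  finally have GU: "Gam T \<nu> u (comp u i) x t =
       2 * \<nu> * (\<Sum>q\<in>UNIV. \<Sum>k\<in>UNIV. dx T k (B i q) x t * dx T k (comp v q) x t) + f x t $ i
       + - (\<Sum>k\<in>UNIV. dx T i (comp u k) x t * (\<Sum>m\<in>UNIV. B k m x t * comp v m x t))
       - 2 * \<nu> * (\<Sum>m\<in>UNIV. \<Sum>k\<in>UNIV. dx T k (B i m) x t * dx T k (comp v m) x t)
       - (dx T i (Gam T \<nu> u n) x t - (\<Sum>k\<in>UNIV. dx T i (comp u k) x t * dx T k n x t))"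
    unfolding K4 Gn .
  have hu': "(\<Sum>m\<in>UNIV. B k m x t * comp v m x t) = comp u k x t + dx T k n x t" for k
    using hu[OF t, of x k] by (simp add: B_def comp_def)
  have GU2: "Gam T \<nu> u (comp u i) x t = f x t $ i - (\<Sum>k\<in>UNIV. dx T i (comp u k) x t * comp u k x t)
      - dx T i (Gam T \<nu> u n) x t"
    unfolding GU hu' by (simp add: algebra_simps sum.distrib)

  have pf: "p = (\<lambda>x t. (\<lambda>x t. Gam T \<nu> u n x t + (\<lambda>x t. (1/2) * (\<Sum>k\<in>UNIV. comp u k x t * comp u k x t)) x t) x t + c)"
    by (simp add: p_def fun_eq_iff power2_norm_eq_inner inner_vec_def comp_def)
  have smsq: "smooth_s T (\<lambda>x t. \<Sum>k\<in>UNIV. comp u k x t * comp u k x t)"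
    by (rule sm_sum[OF T finite], rule sm_mult[OF T su su])
  have sGn: "smooth_s T (Gam T \<nu> u n)" by (rule sm_Gam[OF T smooth(1) sn])
  have "dx T i p x t = dx T i (\<lambda>x t. Gam T \<nu> u n x t + (\<lambda>x t. (1/2) * (\<Sum>k\<in>UNIV. comp u k x t * comp u k x t)) x t) x t
       + dx T i (\<lambda>x t. c) x t"
    unfolding pf by (rule dx_add[OF T sm_add[OF T sGn sm_cmult[OF T smsq]] sm_const[OF T] t])
  also have "dx T i (\<lambda>x t. c) x t = 0" by (rule dx_const[OF T t])
  also have "dx T i (\<lambda>x t. Gam T \<nu> u n x t + (\<lambda>x t. (1/2) * (\<Sum>k\<in>UNIV. comp u k x t * comp u k x t)) x t) x t
      = dx T i (Gam T \<nu> u n) x t + dx T i (\<lambda>x t. (1/2) * (\<Sum>k\<in>UNIV. comp u k x t * comp u k x t)) x t"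
    by (rule dx_add[OF T sGn sm_cmult[OF T smsq] t])
  also have "dx T i (\<lambda>x t. (1/2) * (\<Sum>k\<in>UNIV. comp u k x t * comp u k x t)) x t
      = (1/2) * dx T i (\<lambda>x t. \<Sum>k\<in>UNIV. comp u k x t * comp u k x t) x t"
    by (rule dx_cmult[OF T smsq t])
  also have "dx T i (\<lambda>x t. \<Sum>k\<in>UNIV. comp u k x t * comp u k x t) x t
      = (\<Sum>k\<in>UNIV. dx T i (\<lambda>x t. comp u k x t * comp u k x t) x t)"
    by (rule dx_sum[OF T finite _ t], rule sm_mult[OF T su su])
  also have "\<dots> = (\<Sum>k\<in>UNIV. 2 * (dx T i (comp u k) x t * comp u k x t))"
    by (rule sum.cong[OF refl]) (simp add: dx_mult[OF T su su t] algebra_simps)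
  finally have dp: "dx T i p x t = dx T i (Gam T \<nu> u n) x t + (\<Sum>k\<in>UNIV. dx T i (comp u k) x t * comp u k x t)"
    by (simp add: sum_distrib_left[symmetric])

  have "dt T (comp u i) x t + (\<Sum>k\<in>UNIV. u x t $ k * dx T k (comp u i) x t)
             - \<nu> * lap T (comp u i) x t = Gam T \<nu> u (comp u i) x t"
    by (simp add: Gam_def)
  then show "dt T (comp u i) x t + (\<Sum>k\<in>UNIV. u x t $ k * dx T k (comp u i) x t)
             - \<nu> * lap T (comp u i) x t + dx T i p x t = f x t $ i"
    using GU2 dp by simp
qed

end
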